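(* Let $N\in\mathbb{N}$ with $N\ge3$, $0\le r\le N+1$ and $0\le\ell\le 2N+2$ integers. Then \[ \mathcal{M}_{2r,2\ell}\le\begin{cases}\frac{0.2^\ell}{1.3^{2r}}&\text{if }\ell\ge1,\\[2pt] \frac{0.7}{1.3^{2r}}&\text{if }\ell=0.\end{cases} \]
   Context: $n_N:=\left(\frac{3(3N+4)\log(6N+8)}{1.3^2}\right)^4$ (natural log), and for $r,\ell\in\mathbb{N}_0$ with $\ell$ even, $\mathcal{M}_{r,\ell}:=\sup\left\{\frac{1.4^\ell}{1.3^r}\Gamma\left(\frac{\ell+1}{2}\right)n^{\frac\ell8-\frac r4+\frac{N+2}{2}}e^{-1.3^2n^{1/4}}:\ n\ge n_N\right\}$. *)

theory Defs
  imports "HOL-Analysis.Analysis"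
begin

definition nN :: "nat \<Rightarrow> real" where
  "nN N = ((3 * (3 * real N + 4) * ln (6 * real N + 8)) / 1.3\<^sup>2) ^ 4"

definition calM :: "nat \<Rightarrow> nat \<Rightarrow> nat \<Rightarrow> real" where
  "calM N r l = Sup {(1.4 ^ l / 1.3 ^ r) * Gamma ((real l + 1) / 2)
      * real n powr (real l / 8 - real r / 4 + (real N + 2) / 2)
      * exp (- (1.3\<^sup>2) * real n powr (1/4)) | n :: nat. real n \<ge> nN N}"

end

theory Submission
  imports Defs
begin

lemma gamma_half_bound: "Gamma (real m + 1/2) \<le> sqrt pi * fact m"
proof (induction m)
  case 0 then show ?case using Gamma_one_half_real by simp
next
  case (Suc m)
  have nz: "real m + 1/2 \<notin> \<int>\<^sub>\<le>\<^sub>0"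
  proof
    assume "real m + 1/2 \<in> \<int>\<^sub>\<le>\<^sub>0"
    then have "real m + 1/2 \<le> 0" by (rule nonpos_Ints_nonpos)
    then show False by linarith
  qed
  have "Gamma (real (Suc m) + 1/2) = (real m + 1/2) * Gamma (real m + 1/2)"
    using Gamma_plus1[OF nz] by (simp add: algebra_simps)
  also have "\<dots> \<le> (real m + 1) * (sqrt pi * fact m)"
    using Suc Gamma_real_pos[of "real m + 1/2"]
    by (intro mult_mono) auto
  also have "\<dots> = sqrt pi * fact (Suc m)" by (simp add: algebra_simps)
  finally show ?case .
qed

lemma ln_gamma_bound: "ln (Gamma (real m + 1/2)) \<le> ln 2 + real m * ln (real m)"
proof -
  have gp: "Gamma (real m + 1/2) > 0" by (rule Gamma_real_pos) simp
  have "sqrt pi \<le> sqrt 4" using pi_less_4 by (intro real_sqrt_le_mono) simp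
  then have sp: "sqrt pi \<le> 2" by simp
  have f: "(fact m :: real) \<le> real m ^ m" using fact_le_power[of m] by simp
  have "sqrt pi * fact m \<le> 2 * (real m ^ m)"
    using sp f by (intro mult_mono) auto
  then have "Gamma (real m + 1/2) \<le> 2 * real m ^ m"
    using gamma_half_bound[of m] by linarith
  then have "ln (Gamma (real m + 1/2)) \<le> ln (2 * real m ^ m)"
    using gp by (subst ln_le_cancel_iff) auto
  also have "\<dots> = ln 2 + real m * ln (real m)"
  proof (cases "m = 0")
    case True then show ?thesis by simp
  next
    case False then show ?thesis by (simp add: ln_mult ln_realpow)
  qed
  finally show ?thesis .
qed

lemma core:
  fixes N r l :: nat and n :: real
  assumes N3: "N \<ge> 3" and rN: "r \<le> N + 1" and lN: "l \<le> 2 * N + 2" and nge: "n \<ge> nN N"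
  shows "9.8 ^ l * (Gamma ((real (2 * l) + 1) / 2)
      * n powr (real (2 * l) / 8 - real (2 * r) / 4 + (real N + 2) / 2)
      * exp (- (1.3\<^sup>2) * n powr (1/4))) \<le> 0.7"
proof -
  define x where "x = 6 * real N + 8"
  define u where "u = ln x"
  define T where "T = 3 * (3 * real N + 4) * u / 1.3\<^sup>2"
  define t where "t = n powr (1/4)"
  define K where "K = real l + 2 * real N + 4"
  define e where "e = real (2 * l) / 8 - real (2 * r) / 4 + (real N + 2) / 2"
  define G where "G = Gamma (real l + 1/2)"
  have x26: "x \<ge> 26" using N3 by (simp add: x_def)
  have L26: "ln (26::real) \<ge> 25/26"
    using ln_le_minus_one[of "1/26"] by (simp add: ln_div)
  have u26: "u \<ge> ln 26" using x26 by (simp add: u_def)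
  have upos: "u > 0" using u26 L26 by linarith
  have T_eq: "1.3\<^sup>2 * T = (9 * real N + 12) * u" unfolding T_def by (simp add: power2_eq_square field_simps)
  have T1: "T \<ge> 1"
  proof -
    have "(9 * real N + 12) * u \<ge> 39 * (25/26)"
      using N3 u26 L26 by (intro mult_mono) auto
    then show ?thesis using T_eq by (simp add: power2_eq_square)
  qed
  have nNT: "nN N = T ^ 4" by (simp add: nN_def T_def u_def x_def)
  have T4: "T ^ 4 \<ge> 1" using T1 by simp
  have npos: "n > 0" using nge nNT T4 by linarith
  have lnn: "ln n \<ge> 4 * ln T"
  proof -
    have "ln (T ^ 4) \<le> ln n" using nge nNT T1 npos by (subst ln_le_cancel_iff) auto
    then show ?thesis using T1 by (simp add: ln_realpow)
  qed
  have lnT0: "ln T \<ge> 0" using T1 by simp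
  have tpos: "t > 0" using npos by (simp add: t_def)
  have lnt: "ln t = ln n / 4" by (simp add: t_def ln_powr)
  have tT: "t \<ge> T"
  proof -
    have "ln T \<le> ln t" using lnn lnt by simp
    then show ?thesis using tpos T1 by (subst (asm) ln_le_cancel_iff) auto
  qed
  have KT: "K \<le> 1.3\<^sup>2 * T"
  proof -
    have "(9 * real N + 12) * u \<ge> (9 * real N + 12) * (25/26)"
      using u26 L26 by (intro mult_left_mono) auto
    moreover have "K \<le> (9 * real N + 12) * (25/26)" using lN N3 by (simp add: K_def)
    ultimately show ?thesis using T_eq by linarith
  qed
  have K0: "K \<ge> 0" by (simp add: K_def)
  have step3: "K * ln t - 1.3\<^sup>2 * t \<le> K * ln T - 1.3\<^sup>2 * T"
  proof -
    have "ln t - ln T = ln (t / T)" using tpos T1 by (simp add: ln_div)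
    also have "\<dots> \<le> t / T - 1" using tpos T1 by (intro ln_le_minus_one) simp
    finally have a: "ln t - ln T \<le> (t - T) / T" using T1 by (simp add: field_simps)
    have "K * (ln t - ln T) \<le> K * ((t - T) / T)" using a K0 by (rule mult_left_mono)
    also have "\<dots> = (K / T) * (t - T)" by simp
    also have "\<dots> \<le> 1.3\<^sup>2 * (t - T)"
    proof (rule mult_right_mono)
      show "K / T \<le> 1.3\<^sup>2" using KT T1 by (simp add: divide_le_eq)
      show "0 \<le> t - T" using tT by simp
    qed
    finally show ?thesis by (simp add: algebra_simps)
  qed
  have eK: "e * ln n \<le> K * ln t"
  proof -
    have "e \<le> K / 4" by (simp add: e_def K_def field_simps)
    moreover have "ln n \<ge> 0" using lnn lnT0 by linarith
    ultimately have "e * ln n \<le> K / 4 * ln n" by (rule mult_right_mono)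
    moreover have "K / 4 * ln n = K * ln t" using lnt by simp
    ultimately show ?thesis by linarith
  qed
  have lnu: "ln u \<le> u / 2"
  proof -
    have "ln (u / 2) \<le> u / 2 - 1" using upos by (intro ln_le_minus_one) simp
    moreover have "ln (u / 2) = ln u - ln 2" using upos by (simp add: ln_div)
    moreover have "ln (2::real) < 1" by (rule ln_2_less_1)
    ultimately show ?thesis by linarith
  qed
  have lnT: "ln T \<le> 1.5 * u"
  proof -
    define c :: real where "c = 1.5 / 1.3\<^sup>2"
    have cpos: "c > 0" by (simp add: c_def)
    have cle1: "c \<le> 1" by (simp add: c_def power2_eq_square)
    have "T = c * x * u" unfolding T_def x_def c_def by (simp add: power2_eq_square field_simps)
    then have "ln T = ln c + ln x + ln u"
      using x26 upos cpos by (simp add: ln_mult)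
    then have "ln T = ln c + u + ln u" by (simp add: u_def)
    moreover have "ln c \<le> 0" using cle1 cpos by simp
    ultimately show ?thesis using lnu by linarith
  qed
  have KlnT: "K * ln T \<le> K * (1.5 * u)" using lnT K0 by (rule mult_left_mono)
  have lnl: "real l * ln (real l) \<le> real l * u - real l * ln 3"
  proof (cases "l = 0")
    case True then show ?thesis by simp
  next
    case False
    have "3 * real l \<le> x" using lN by (simp add: x_def)
    then have "ln (3 * real l) \<le> u" using False by (simp add: u_def)
    then have "ln (real l) \<le> u - ln 3" using False by (simp add: ln_mult)
    then show ?thesis by (simp add: mult_left_mono right_diff_distrib[symmetric])
  qed
  have lnG: "ln G \<le> ln 2 + real l * ln (real l)" unfolding G_def by (rule ln_gamma_bound)
  have Gpos: "G > 0" unfolding G_def by (rule Gamma_real_pos) simp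
  have cst: "2 * ln 9.8 - 2 * ln 3 - ln 26 \<le> (-0.58 :: real)"
  proof -
    define a :: real where "a = 9.8"
    define b :: real where "b = 3"
    define c :: real where "c = 26"
    have pos: "a > 0" "b > 0" "c > 0" by (simp_all add: a_def b_def c_def)
    have "ln (a * a / (b * b * c)) = 2 * ln a - 2 * ln b - ln c"
      using pos by (simp add: ln_divide_pos ln_mult_pos)
    moreover have "ln (a * a / (b * b * c)) \<le> a * a / (b * b * c) - 1"
      using pos by (intro ln_le_minus_one) simp
    moreover have "a * a / (b * b * c) - 1 \<le> -0.58" by (simp add: a_def b_def c_def)
    ultimately show ?thesis by (simp add: a_def b_def c_def)
  qed
  have c1: "real l * (2 * ln 9.8 - 2 * ln 3 - ln 26) \<le> real l * (-0.58)"
    using cst by (intro mult_left_mono) auto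
  have c2: "real l * ln 26 \<le> real l * u" using u26 by (intro mult_left_mono) auto
  have c3: "(6 * real N + 6 - 3 * real l) * (25/26) \<le> (6 * real N + 6 - 3 * real l) * u"
    using u26 L26 lN by (intro mult_left_mono) auto
  have Kexp: "K * u = real l * u + 2 * real N * u + 4 * u" by (simp add: K_def algebra_simps)
  have L07: "ln (0.7::real) \<ge> -3/7"
    using ln_le_minus_one[of "10/7"] by (simp add: ln_div)
  have Tu: "1.3\<^sup>2 * T = 9 * real N * u + 12 * u" using T_eq by (simp add: algebra_simps)
  have G_eq: "Gamma ((real (2 * l) + 1) / 2) = G" by (simp add: G_def add_divide_distrib)
  have lnLHS: "ln (9.8 ^ l * (G * n powr e * exp (- (1.3\<^sup>2) * t)))
      = real l * ln 9.8 + ln G + e * ln n - 1.3\<^sup>2 * t"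
    using Gpos npos by (simp add: ln_mult ln_realpow ln_powr)
  have c3': "75/13 * real N + 75/13 - 75/26 * real l \<le> 6 * (real N * u) + 6 * u - 3 * (real l * u)"
  proof -
    have "(6 * real N + 6 - 3 * real l) * (25/26) = 75/13 * real N + 75/13 - 75/26 * real l"
      by (simp add: algebra_simps)
    moreover have "(6 * real N + 6 - 3 * real l) * u = 6 * (real N * u) + 6 * u - 3 * (real l * u)"
      by (simp add: algebra_simps)
    ultimately show ?thesis using c3 by linarith
  qed
  have c1': "2 * (real l * ln 9.8) - 2 * (real l * ln 3) - real l * ln 26 \<le> -(58/100) * real l"
    using c1 by (simp add: algebra_simps)
  have KlnT': "K * ln T \<le> (3/2) * (K * u)" using KlnT by (simp add: algebra_simps)
  have Kexp': "K * u = real l * u + 2 * (real N * u) + 4 * u" using Kexp by (simp add: algebra_simps)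
  have Tu': "1.3\<^sup>2 * T = 9 * (real N * u) + 12 * u" using Tu by (simp add: algebra_simps)
  have lnl': "real l * ln (real l) \<le> real l * u - real l * ln 3" by (rule lnl)
  have fin: "ln (9.8 ^ l * (G * n powr e * exp (- (1.3\<^sup>2) * t))) \<le> ln 0.7"
  proof -
    have h13: "(1.3::real)\<^sup>2 = (169/100)" by (simp add: power2_eq_square)
    have s3: "K * ln t - (169/100) * t \<le> K * ln T - (169/100) * T" using step3 unfolding h13 .
    have tu: "(169/100) * T = 9 * (real N * u) + 12 * u" using Tu' unfolding h13 .
    have "real l * ln 9.8 + ln G + e * ln n - (169/100) * t \<le> ln 0.7"
    proof -
      have lr: "real l \<le> 2 * real N + 2" using lN by linarith
      have Nr: "real N \<ge> 3" using N3 by linarith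
      show ?thesis
        using s3 eK KlnT' lnl' lnG c1' c2 c3' Kexp' L07 tu ln_2_less_1 lr Nr
        by linarith
    qed
    moreover have "ln (9.8 ^ l * (G * n powr e * exp (- (169/100) * t)))
      = real l * ln 9.8 + ln G + e * ln n - (169/100) * t" using lnLHS unfolding h13 .
    moreover have "(1.3::real)\<^sup>2 = 1.3\<^sup>2" ..
    ultimately show ?thesis unfolding h13 by linarith
  qed
  have pos: "9.8 ^ l * (G * n powr e * exp (- (1.3\<^sup>2) * t)) > 0"
    using Gpos npos by simp
  have "9.8 ^ l * (G * n powr e * exp (- (1.3\<^sup>2) * t)) \<le> 0.7"
    using fin pos by (subst (asm) ln_le_cancel_iff) auto
  then show ?thesis unfolding G_eq e_def t_def .
qed

theorem lemma3p9:
  fixes N r l :: nat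
  assumes "N \<ge> 3" and "r \<le> N + 1" and "l \<le> 2 * N + 2"
  shows "calM N (2 * r) (2 * l) \<le>
           (if l \<ge> 1 then 0.2 ^ l / 1.3 ^ (2 * r) else 0.7 / 1.3 ^ (2 * r))"
proof -
  define B :: real where "B = (if l \<ge> 1 then 0.2 ^ l / 1.3 ^ (2 * r) else 0.7 / 1.3 ^ (2 * r))"
  have B07: "0.2 ^ l / 1.3 ^ (2 * r) * 0.7 \<le> B"
    by (cases "l \<ge> 1") (auto simp: B_def divide_simps)
  let ?S = "{(1.4 ^ (2 * l) / 1.3 ^ (2 * r)) * Gamma ((real (2 * l) + 1) / 2)
      * real n powr (real (2 * l) / 8 - real (2 * r) / 4 + (real N + 2) / 2)
      * exp (- (1.3\<^sup>2) * real n powr (1/4)) | n :: nat. real n \<ge> nN N}"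
  have ne: "?S \<noteq> {}"
  proof -
    obtain n :: nat where "nN N \<le> real n" using real_arch_simple by blast
    then show ?thesis by blast
  qed
  have bd: "y \<le> B" if "y \<in> ?S" for y
  proof -
    obtain n :: nat where n: "real n \<ge> nN N" and y: "y = (1.4 ^ (2 * l) / 1.3 ^ (2 * r)) * Gamma ((real (2 * l) + 1) / 2)
      * real n powr (real (2 * l) / 8 - real (2 * r) / 4 + (real N + 2) / 2)
      * exp (- (1.3\<^sup>2) * real n powr (1/4))" using \<open>y \<in> ?S\<close> by blast
    define E where "E = Gamma ((real (2 * l) + 1) / 2)
      * real n powr (real (2 * l) / 8 - real (2 * r) / 4 + (real N + 2) / 2)
      * exp (- (1.3\<^sup>2) * real n powr (1/4))"
    have cE: "9.8 ^ l * E \<le> 0.7" unfolding E_def using core[OF assms n] .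
    have "(1.4::real) ^ (2 * l) = 0.2 ^ l * 9.8 ^ l"
    proof -
      have "(1.4::real) ^ (2 * l) = (1.4 ^ 2) ^ l" by (simp add: power_mult)
      also have "\<dots> = (0.2 * 9.8) ^ l" by (simp add: power2_eq_square)
      also have "\<dots> = 0.2 ^ l * 9.8 ^ l" by (rule power_mult_distrib)
      finally show ?thesis .
    qed
    then have "y = 0.2 ^ l / 1.3 ^ (2 * r) * (9.8 ^ l * E)"
      unfolding y E_def by (simp add: algebra_simps)
    also have "\<dots> \<le> 0.2 ^ l / 1.3 ^ (2 * r) * 0.7"
      using cE by (intro mult_left_mono) auto
    also have "\<dots> \<le> B" by (rule B07)
    finally show ?thesis .
  qed
  have "calM N (2 * r) (2 * l) = Sup ?S" unfolding calM_def ..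
  also have "\<dots> \<le> B" using ne bd by (rule cSup_least)
  finally show ?thesis unfolding B_def .
qed

end
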